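(* Let $f\in\mathcal{S}^*_{nc}$. Then: (1) For $\alpha\in(0,1)$, let $r_\alpha\in(0,1)$ be the root of $(1-r)-\alpha\cos r=0$. Then $\operatorname{Re}\frac{zf'(z)}{f(z)}>\alpha$ for all $|z|<r_\alpha$ (i.e. $f$ is starlike of order $\alpha$ in $|z|<r_\alpha$). (2) For $\beta>1$, let $r_\beta=r_0(\beta)$ if $1<\beta<2/\cos 1$, where $r_0(\beta)$ is the smallest positive root of $1+r=\beta\cos r$, and $r_\beta=1$ if $\beta\ge 2/\cos 1$. Then $\operatorname{Re}\frac{zf'(z)}{f(z)}<\beta$ for all $|z|<r_\beta$. Both radii are sharp, i.e. they cannot be replaced by larger numbers for the whole class $\mathcal{S}^*_{nc}$.
   Context: $\mathbb{D}$ is the open unit disk. $\mathcal{A}$ is the class of analytic $f$ on $\mathbb{D}$ with $f(0)=0$, $f'(0)=1$. For analytic $f,g$ on $\mathbb{D}$, $f\prec g$ means $f=g\circ\omega$ for some analytic $\omega:\mathbb{D}\to\mathbb{D}$ with $\omega(0)=0$. $\mathcal{S}^*_{nc}=\{f\in\mathcal{A}: zf'(z)/f(z)\prec (1+z)/\cos z\}$. *)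

theory Defs
  imports "HOL-Analysis.Analysis"
begin

definition subordinate :: "(complex \<Rightarrow> complex) \<Rightarrow> (complex \<Rightarrow> complex) \<Rightarrow> bool" where
  "subordinate F G \<longleftrightarrow>
     (\<exists>\<omega>. \<omega> holomorphic_on ball 0 1 \<and> \<omega> 0 = 0 \<and> \<omega> ` ball 0 1 \<subseteq> ball 0 1 \<and>
          (\<forall>z\<in>ball 0 1. F z = G (\<omega> z)))"

definition classA :: "(complex \<Rightarrow> complex) set" where
  "classA = {f. f holomorphic_on ball 0 1 \<and> f 0 = 0 \<and> deriv f 0 = 1}"

text \<open>z f'(z)/f(z), with its removable value 1 at the origin (f \<in> \<A>).\<close>
definition zf'_over_f :: "(complex \<Rightarrow> complex) \<Rightarrow> complex \<Rightarrow> complex" where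
  "zf'_over_f f z = (if z = 0 then 1 else z * deriv f z / f z)"

definition Snc :: "(complex \<Rightarrow> complex) set" where
  "Snc = {f \<in> classA. subordinate (zf'_over_f f) (\<lambda>w. (1 + w) / cos w)}"

end

theory Submission
  imports Defs "HOL-Complex_Analysis.Complex_Analysis"
begin
lemma cos_bounds01:
  fixes x :: real assumes "0 \<le> x" "x \<le> 1"
  shows "1 - x\<^sup>2/2 \<le> cos x" "cos x \<le> 1 - x\<^sup>2/2 + x^4/24"
proof -
  have "1 - x\<^sup>2/2 \<le> cos x \<and> cos x \<le> 1 - x\<^sup>2/2 + x^4/24"
  proof (cases "x = 0")
    case True then show ?thesis by simp
  next
    case False
    then have "x > 0" using assms by simp
    from Maclaurin_cos_expansion2[OF this, of 4] obtain t where t: "0 < t" "t < x"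
      "cos x = (\<Sum>m<4. cos_coeff m * x ^ m) + (cos (t + 1/2 * real 4 * pi) / fact 4) * x ^ 4"
      by auto
    have s: "(\<Sum>m<4. cos_coeff m * x ^ m) = 1 - x\<^sup>2/2"
      by (simp add: lessThan_nat_numeral cos_coeff_def power2_eq_square)
    have c: "cos (t + 1/2 * real 4 * pi) = cos t"
      by (simp add: cos_add)
    have "0 \<le> cos t" using t assms pi_ge_two by (intro cos_ge_zero) auto
    moreover have "cos t \<le> 1" by simp
    moreover have "x^4 \<ge> 0" using assms by simp
    ultimately show ?thesis using t(3) unfolding s c
      by (auto simp: eval_nat_numeral mult_left_le_one_le)
  qed
  then show "1 - x\<^sup>2/2 \<le> cos x" "cos x \<le> 1 - x\<^sup>2/2 + x^4/24" by auto
qed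

lemma sin_lower01:
  fixes x :: real assumes "0 \<le> x" "x \<le> 1"
  shows "x - x^3/6 \<le> sin x"
proof (cases "x = 0")
  case True then show ?thesis by simp
next
  case False
  then have "x > 0" using assms by simp
  from Maclaurin_sin_expansion3[OF _ this, of 5] obtain t where t: "0 < t" "t < x"
    "sin x = (\<Sum>m<5. sin_coeff m * x ^ m) + (sin (t + 1/2 * real 5 * pi) / fact 5) * x ^ 5"
    by auto
  have s: "(\<Sum>m<5. sin_coeff m * x ^ m) = x - x^3/6"
    by (simp add: lessThan_nat_numeral sin_coeff_def fact_numeral)
  have "sin (t + 1/2 * real 5 * pi) = sin ((t + pi/2) + 2*pi)"
    by (rule arg_cong[where f=sin]) (simp add: field_simps)
  also have "\<dots> = sin (t + pi/2)" by (rule sin_periodic)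
  also have "\<dots> = cos t" by (simp add: sin_add)
  finally have c: "sin (t + 1/2 * real 5 * pi) = cos t" .
  have "0 \<le> cos t" using t assms pi_ge_two by (intro cos_ge_zero) auto
  then show ?thesis using t(3) assms unfolding s c by simp
qed

lemma cosh_upper:
  fixes y :: real assumes "\<bar>y\<bar> \<le> 1"
  shows "cosh y \<le> 1 + y\<^sup>2/2 + y^4/8"
proof -
  obtain t1 where t1: "\<bar>t1\<bar> \<le> \<bar>y\<bar>" "exp y = (\<Sum>m<4. (y ^ m) / fact m) + (exp t1 / fact 4) * y ^ 4"
    using Maclaurin_exp_le by blast
  obtain t2 where t2: "\<bar>t2\<bar> \<le> \<bar>-y\<bar>" "exp (-y) = (\<Sum>m<4. ((-y) ^ m) / fact m) + (exp t2 / fact 4) * (-y) ^ 4"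
    using Maclaurin_exp_le by blast
  have e1: "exp t1 \<le> 3" using t1(1) assms exp_le by (meson abs_le_D1 exp_le_cancel_iff order.trans)
  have e2: "exp t2 \<le> 3" using t2(1) assms exp_le by (metis abs_le_D1 abs_minus_cancel exp_le_cancel_iff order.trans)
  have y4: "0 \<le> y^4" by simp
  have "cosh y = (exp y + exp (-y))/2" by (simp add: cosh_def)
  also have "\<dots> = 1 + y\<^sup>2/2 + (exp t1 + exp t2)/48 * y^4"
    unfolding t1(2) t2(2) by (simp add: eval_nat_numeral field_simps)
  also have "\<dots> \<le> 1 + y\<^sup>2/2 + 6/48 * y^4"
    using e1 e2 y4 by (intro add_left_mono mult_right_mono) auto
  finally show ?thesis by simp
qed

lemma sinh_ge_self: fixes y :: real assumes "0 \<le> y" shows "y \<le> sinh y"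
  using real_le_x_sinh[OF assms] by (simp add: sinh_def exp_minus)

lemma y_sinh_ge: fixes y :: real shows "y\<^sup>2 \<le> y * sinh y"
proof (cases "y \<ge> 0")
  case True then show ?thesis using sinh_ge_self[OF True] by (simp add: power2_eq_square mult_left_mono)
next
  case False
  then have "-y \<le> sinh (-y)" using sinh_ge_self[of "-y"] by simp
  then have "-y \<le> - sinh y" by simp
  then show ?thesis using False by (simp add: power2_eq_square)
qed

lemma sinh_sq_ge: fixes y :: real shows "y\<^sup>2 \<le> (sinh y)\<^sup>2"
proof -
  have "\<bar>y\<bar> \<le> \<bar>sinh y\<bar>"
    using sinh_ge_self[of "\<bar>y\<bar>"] by (cases "y \<ge> 0") auto
  then show ?thesis by (metis abs_ge_zero power2_abs power_mono)
qed

lemma p1_nonneg: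
  fixes s :: real assumes "0 \<le> s" "s \<le> 1"
  shows "0 \<le> 1 - s + s\<^sup>2/2 - 3/4 * (1 - s\<^sup>2/2 + s^4/24)\<^sup>2"
proof -
  have "1 - s + s\<^sup>2/2 - 3/4 * (1 - s\<^sup>2/2 + s^4/24)\<^sup>2 =
    (1/4) * s^0 * (1 - s)^8 + (1) * s^1 * (1 - s)^7 + (5/4) * s^2 * (1 - s)^6 + (1/2) * s^3 * (1 - s)^5 + (1) * s^4 * (1 - s)^4 + (3) * s^5 * (1 - s)^3 + (105/32) * s^6 * (1 - s)^2 + (25/16) * s^7 * (1 - s)^1 + (215/768) * s^8 * (1 - s)^0"
    by (simp add: field_simps power_numeral_reduce power2_eq_square)
  also have "0 \<le> \<dots>" using assms by (intro add_nonneg_nonneg mult_nonneg_nonneg zero_le_power) auto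
  finally show ?thesis by simp
qed

lemma p2_nonneg:
  fixes a :: real assumes "0 \<le> a" "a \<le> 1"
  shows "5/8 * (1 - a\<^sup>2) * (2 - (1 - a\<^sup>2/2)\<^sup>2) \<le> 3/4 * (1 - a\<^sup>2/2)^3 + (1 + a) * (1 - a\<^sup>2/2) * (a - a^3/6)"
proof -
  have "3/4 * (1 - a\<^sup>2/2)^3 + (1 + a) * (1 - a\<^sup>2/2) * (a - a^3/6) - 5/8 * (1 - a\<^sup>2) * (2 - (1 - a\<^sup>2/2)\<^sup>2) =
    (1/8) * a^0 * (1 - a)^6 + (7/4) * a^1 * (1 - a)^5 + (27/4) * a^2 * (1 - a)^4 + (34/3) * a^3 * (1 - a)^3 + (941/96) * a^4 * (1 - a)^2 + (75/16) * a^5 * (1 - a)^1 + (89/96) * a^6 * (1 - a)^0"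
    by (simp add: field_simps power_numeral_reduce power2_eq_square)
  also have "0 \<le> \<dots>" using assms by (intro add_nonneg_nonneg mult_nonneg_nonneg zero_le_power) auto
  finally show ?thesis by simp
qed

lemma F1:
  fixes s :: real assumes "0 \<le> s" "s \<le> 1"
  shows "(1 - s) * sin s - cos s + 3/4 * (cos s)\<^sup>2 \<le> 0"
proof -
  have c1: "1 - s\<^sup>2/2 \<le> cos s" and c2: "cos s \<le> 1 - s\<^sup>2/2 + s^4/24" using cos_bounds01[OF assms] by auto
  have c0: "0 \<le> cos s" using assms pi_ge_two by (intro cos_ge_zero) auto
  have "sin s \<le> s" using sin_x_le_x assms by auto
  then have "(1 - s) * sin s \<le> (1 - s) * s" using assms by (intro mult_left_mono) auto
  moreover have "(cos s)\<^sup>2 \<le> (1 - s\<^sup>2/2 + s^4/24)\<^sup>2" by (rule power_mono[OF c2 c0])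
  moreover note p1_nonneg[OF assms] c1
  ultimately show ?thesis by (simp add: algebra_simps power2_eq_square) 
qed

lemma gslope:
  fixes a b :: real assumes "0 \<le> a" "a \<le> b" "b \<le> 1"
  shows "(1 - b) / cos b + 3/4 * b \<le> (1 - a) / cos a + 3/4 * a"
proof -
  have cpos: "cos x > 0" if "0 \<le> x" "x \<le> 1" for x :: real
    using that pi_gt3 by (intro cos_gt_zero_pi) auto
  show ?thesis
  proof (rule DERIV_nonpos_imp_decreasing_open[OF assms(2), where f = "\<lambda>s. (1 - s) / cos s + 3/4 * s"])
    fix x assume x: "a < x" "x < b"
    then have x0: "0 \<le> x" "x \<le> 1" using assms by auto
    have cx: "cos x > 0" using cpos[OF x0] .
    have "((\<lambda>s. (1 - s) / cos s + 3/4 * s) has_real_derivative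
       ((-1) * cos x - (1 - x) * (- sin x)) / (cos x)\<^sup>2 + 3/4) (at x)"
      using cx by (auto intro!: derivative_eq_intros simp: power2_eq_square)
    moreover have "((-1) * cos x - (1 - x) * (- sin x)) / (cos x)\<^sup>2 + 3/4 \<le> 0"
    proof -
      have "((-1) * cos x - (1 - x) * (- sin x)) / (cos x)\<^sup>2 + 3/4
          = ((1 - x) * sin x - cos x + 3/4 * (cos x)\<^sup>2) / (cos x)\<^sup>2"
        using cx by (simp add: field_simps)
      also have "\<dots> \<le> 0" using F1[OF x0] by (simp add: divide_nonpos_nonneg)
      finally show ?thesis .
    qed
    ultimately show "\<exists>y. ((\<lambda>s. (1 - s) / cos s + 3/4 * s) has_real_derivative y) (at x) \<and> y \<le> 0" by blast
  next
    show "continuous_on {a..b} (\<lambda>s. (1 - s) / cos s + 3/4 * s)"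
      using cpos assms by (intro continuous_intros) (auto simp: less_imp_neq[symmetric])
  qed
qed

lemma cosh_lower: fixes y :: real shows "1 + y\<^sup>2/2 \<le> cosh y"
proof -
  obtain t1 where t1: "exp y = (\<Sum>m<4. (y ^ m) / fact m) + (exp t1 / fact 4) * y ^ 4"
    using Maclaurin_exp_le by blast
  obtain t2 where t2: "exp (-y) = (\<Sum>m<4. ((-y) ^ m) / fact m) + (exp t2 / fact 4) * (-y) ^ 4"
    using Maclaurin_exp_le by blast
  have "cosh y = (exp y + exp (-y))/2" by (simp add: cosh_def)
  also have "\<dots> = 1 + y\<^sup>2/2 + (exp t1 + exp t2)/48 * y^4"
    unfolding t1 t2 by (simp add: eval_nat_numeral field_simps)
  also have "\<dots> \<ge> 1 + y\<^sup>2/2" by (simp add: add_pos_pos less_imp_le)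
  finally show ?thesis .
qed

lemma sinh_upper: fixes y :: real assumes "0 \<le> y" "y \<le> 1" shows "sinh y \<le> y + y^3/2"
proof -
  obtain t1 where t1: "\<bar>t1\<bar> \<le> \<bar>y\<bar>" "exp y = (\<Sum>m<3. (y ^ m) / fact m) + (exp t1 / fact 3) * y ^ 3"
    using Maclaurin_exp_le by blast
  obtain t2 where t2: "\<bar>t2\<bar> \<le> \<bar>-y\<bar>" "exp (-y) = (\<Sum>m<3. ((-y) ^ m) / fact m) + (exp t2 / fact 3) * (-y) ^ 3"
    using Maclaurin_exp_le by blast
  have "t1 \<le> 1" using t1(1) assms by (simp add: abs_le_iff)
  then have e1: "exp t1 \<le> 3" using exp_le by (meson exp_le_cancel_iff order.trans)
  have "t2 \<le> 1" using t2(1) assms by (simp add: abs_le_iff)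
  then have e2: "exp t2 \<le> 3" using exp_le by (meson exp_le_cancel_iff order.trans)
  have y3: "0 \<le> y^3" using assms by simp
  have "sinh y = (exp y - exp (-y))/2" by (simp add: sinh_def)
  also have "\<dots> = y + (exp t1 + exp t2)/12 * y^3"
    unfolding t1(2) t2(2) by (simp add: eval_nat_numeral field_simps)
  also have "\<dots> \<le> y + 6/12 * y^3"
    using e1 e2 y3 by (intro add_left_mono mult_right_mono) auto
  finally show ?thesis by simp
qed

lemma y_sinh_upper: fixes y :: real assumes "\<bar>y\<bar> \<le> 1" shows "y * sinh y \<le> y\<^sup>2 + y^4/2"
proof -
  have "y * sinh y = \<bar>y\<bar> * sinh \<bar>y\<bar>" by (cases "y \<ge> 0") auto
  also have "\<dots> \<le> \<bar>y\<bar> * (\<bar>y\<bar> + \<bar>y\<bar>^3/2)"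
    using sinh_upper[of "\<bar>y\<bar>"] assms by (intro mult_left_mono) auto
  also have "\<dots> = y\<^sup>2 + y^4/2" by (simp add: power2_eq_square eval_nat_numeral field_simps)
  finally show ?thesis .
qed

lemma sym_ineq:
  fixes x y :: real assumes "0 \<le> x" "x\<^sup>2 + y\<^sup>2 \<le> 1"
  shows "y * sin x * sinh y \<le> x * cos x * cosh y"
proof -
  have x2: "x\<^sup>2 \<le> 1" using assms zero_le_power2[of y] by linarith
  have x1: "x \<le> 1" using x2 abs_square_le_1[of x] by simp
  have y2: "y\<^sup>2 \<le> 1" using assms zero_le_power2[of x] by linarith
  have y1: "\<bar>y\<bar> \<le> 1" using y2 abs_square_le_1[of y] by simp
  have sx: "0 \<le> sin x" "sin x \<le> x" using assms x1 pi_gt3 by (auto intro!: sin_ge_zero sin_x_le_x)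
  have ys0: "0 \<le> y * sinh y" using y_sinh_ge[of y] zero_le_power2[of y] by linarith
  have ys: "y * sinh y \<le> y\<^sup>2 + y^4/2" using y_sinh_upper[OF y1] .
  have cx: "1 - x\<^sup>2/2 \<le> cos x" using cos_bounds01[OF assms(1) x1] by simp
  have ch: "1 + y\<^sup>2/2 \<le> cosh y" by (rule cosh_lower)
  have "y * sin x * sinh y = sin x * (y * sinh y)" by simp
  also have "\<dots> \<le> x * (y\<^sup>2 + y^4/2)"
    using sx ys0 ys by (intro mult_mono) auto
  also have "\<dots> \<le> x * ((1 - x\<^sup>2/2) * (1 + y\<^sup>2/2))"
  proof (intro mult_left_mono assms(1))
    define t where "t = y\<^sup>2"
    have t0: "0 \<le> t" "t \<le> 1" using y2 unfolding t_def by auto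
    have "(1 + t)/2 \<le> 1 - x\<^sup>2/2" using assms unfolding t_def by simp
    then have "(1 + t)/2 * (1 + t/2) \<le> (1 - x\<^sup>2/2) * (1 + t/2)"
      using t0 by (intro mult_right_mono) auto
    moreover have "t + t\<^sup>2/2 \<le> (1 + t)/2 * (1 + t/2)"
    proof -
      have "t\<^sup>2 \<le> t" using mult_left_le_one_le[of t t] t0 by (simp add: power2_eq_square)
      then show ?thesis using t0 by (simp add: field_simps power2_eq_square)
    qed
    ultimately show "y\<^sup>2 + y^4/2 \<le> (1 - x\<^sup>2/2) * (1 + y\<^sup>2/2)"
      unfolding t_def by (simp add: power2_eq_square eval_nat_numeral)
  qed
  also have "\<dots> \<le> x * (cos x * cosh y)"
  proof (intro mult_left_mono mult_mono assms(1) cx ch)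
    show "0 \<le> cos x" using cx x2 by linarith
    show "0 \<le> 1 + y\<^sup>2/2" by simp
  qed
  finally show ?thesis by simp
qed

lemma key_alg:
  fixes a A B Ch S Q t :: real
  assumes a: "0 \<le> a" "a \<le> 1" and A0: "1 - a\<^sup>2/2 \<le> A" and B0: "a - a^3/6 \<le> B"
    and t: "0 \<le> t" "t \<le> 1" and S: "t \<le> S" and Q: "t \<le> Q" and Qdef: "Q = Ch\<^sup>2 - 1"
    and Ch1: "1 \<le> Ch" and Ch2: "Ch - 1 \<le> 5/8 * t" and AB: "A\<^sup>2 + B\<^sup>2 = 1"
  shows "(1 - a\<^sup>2) * (Ch - 1) * (Ch + 1 - A\<^sup>2) \<le> 3/4 * t * A * (A\<^sup>2 + Q) + (1 + a) * A * B * S"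
proof -
  have a2: "a\<^sup>2 \<le> 1" using a by (simp add: power_le_one)
  have a3: "a^3 \<le> a"
  proof -
    have "a*a \<le> 1" using a by (intro mult_le_one) auto
    then have "a*(a*a) \<le> a*1" using a by (intro mult_left_mono) auto
    then show ?thesis by (simp add: eval_nat_numeral)
  qed
  have A00: "1/2 \<le> 1 - a\<^sup>2/2" using a2 by simp
  have Apos: "0 \<le> A" using A0 A00 by linarith
  have B00: "0 \<le> a - a^3/6" using a3 a by simp
  have Bpos: "0 \<le> B" using B0 B00 by linarith
  have k1: "t * (3/4 * A * (A\<^sup>2 + t) + (1 + a) * A * B) \<le> 3/4 * t * A * (A\<^sup>2 + Q) + (1 + a) * A * B * S"
  proof -
    have "3/4 * t * A * (A\<^sup>2 + t) \<le> 3/4 * t * A * (A\<^sup>2 + Q)"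
      using Q t Apos by (intro mult_left_mono) auto
    moreover have "(1 + a) * A * B * t \<le> (1 + a) * A * B * S"
      using S a Apos Bpos by (intro mult_left_mono) auto
    moreover have "t * (3/4 * A * (A\<^sup>2 + t) + (1 + a) * A * B) = 3/4 * t * A * (A\<^sup>2 + t) + (1 + a) * A * B * t"
      by (simp add: algebra_simps)
    ultimately show ?thesis by linarith
  qed
  have k2: "(1 - a\<^sup>2) * (Ch - 1) * (Ch + 1 - A\<^sup>2) \<le> (1 - a\<^sup>2) * (5/8 * t) * (2 + 5/8 * t - A\<^sup>2)"
  proof -
    have "A\<^sup>2 \<le> 1" using AB zero_le_power2[of B] by linarith
    then have "0 \<le> Ch + 1 - A\<^sup>2" using Ch1 by simp
    moreover have "Ch + 1 - A\<^sup>2 \<le> 2 + 5/8 * t - A\<^sup>2" using Ch2 by simp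
    ultimately show ?thesis using a2 Ch1 Ch2 by (intro mult_mono) auto
  qed
  have k3: "5/8 * (1 - a\<^sup>2) * (2 + 5/8 * t - A\<^sup>2) \<le> 3/4 * A * (A\<^sup>2 + t) + (1 + a) * A * B"
  proof -
    have p: "5/8 * (1 - a\<^sup>2) * (2 - (1 - a\<^sup>2/2)\<^sup>2) \<le> 3/4 * (1 - a\<^sup>2/2)^3 + (1 + a) * (1 - a\<^sup>2/2) * (a - a^3/6)"
      by (rule p2_nonneg[OF a])
    have h1: "(1 - a\<^sup>2/2)^3 \<le> A^3" using A0 A00 by (intro power_mono) auto
    have h2: "(1 - a\<^sup>2/2) * (a - a^3/6) \<le> A * B" using A0 B0 A00 B00 by (intro mult_mono) auto
    have h2': "(1 + a) * ((1 - a\<^sup>2/2) * (a - a^3/6)) \<le> (1 + a) * (A * B)" using h2 a by (intro mult_left_mono) auto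
    have h3: "(1 - a\<^sup>2/2)\<^sup>2 \<le> A\<^sup>2" using A0 A00 by (intro power_mono) auto
    have h3': "5/8 * (1 - a\<^sup>2) * (2 - A\<^sup>2) \<le> 5/8 * (1 - a\<^sup>2) * (2 - (1 - a\<^sup>2/2)\<^sup>2)"
      using h3 a2 by (intro mult_left_mono) auto
    have h4: "25/64 * (1 - a\<^sup>2) * t \<le> 3/4 * A * t"
    proof -
      have e: "25/64 * (1 - a\<^sup>2) = 25/64 - 25/64 * a\<^sup>2" by (simp add: right_diff_distrib)
      have "3/4 - 3/8 * a\<^sup>2 \<le> 3/4 * A" using A0 by linarith
      then have "25/64 * (1 - a\<^sup>2) \<le> 3/4 * A" unfolding e using a2 zero_le_power2[of a] by linarith
      then show ?thesis using t by (intro mult_right_mono) auto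
    qed
    have "5/8 * (1 - a\<^sup>2) * (2 + 5/8 * t - A\<^sup>2) = 5/8 * (1 - a\<^sup>2) * (2 - A\<^sup>2) + 25/64 * (1 - a\<^sup>2) * t"
      by (simp add: field_simps)
    also have "\<dots> \<le> 3/4 * A^3 + (1 + a) * (A * B) + 3/4 * A * t"
      using p h1 h2' h3' h4 by linarith
    also have "\<dots> = 3/4 * A * (A\<^sup>2 + t) + (1 + a) * A * B"
      by (simp add: algebra_simps power2_eq_square eval_nat_numeral)
    finally show ?thesis .
  qed
  have "(1 - a\<^sup>2) * (5/8 * t) * (2 + 5/8 * t - A\<^sup>2) = t * (5/8 * (1 - a\<^sup>2) * (2 + 5/8 * t - A\<^sup>2))"
    by (simp add: ac_simps)
  also have "\<dots> \<le> t * (3/4 * A * (A\<^sup>2 + t) + (1 + a) * A * B)"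
    using k3 t by (intro mult_left_mono) auto
  finally show ?thesis using k1 k2 by linarith
qed

lemma lin_aux: fixes X Y c r a :: real shows "X + c * r \<le> Y + c * a \<Longrightarrow> X \<le> Y - c * (r - a)"
  by (simp add: algebra_simps)

lemma lower_neg:
  fixes a y :: real
  assumes a0: "0 \<le> a" and ay: "a\<^sup>2 + y\<^sup>2 < 1"
  shows "(1 - sqrt (a\<^sup>2 + y\<^sup>2)) / cos (sqrt (a\<^sup>2 + y\<^sup>2)) * ((cos a)\<^sup>2 + (sinh y)\<^sup>2)
         \<le> (1 - a) * cos a * cosh y + y * sin a * sinh y"
proof -
  define \<rho> where "\<rho> = sqrt (a\<^sup>2 + y\<^sup>2)"
  define t where "t = y\<^sup>2"
  define A where "A = cos a"
  define B where "B = sin a"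
  define Ch where "Ch = cosh y"
  define S where "S = y * sinh y"
  define Q where "Q = (sinh y)\<^sup>2"
  have t0: "0 \<le> t" unfolding t_def by simp
  have a2: "a\<^sup>2 < 1" using ay t0 unfolding t_def by linarith
  have a1: "a < 1" using a2 abs_square_less_1[of a] a0 by simp
  have t1: "t < 1" using ay zero_le_power2[of a] unfolding t_def by linarith
  have y1: "\<bar>y\<bar> \<le> 1" using t1 abs_square_le_1[of y] unfolding t_def by simp
  have \<rho>a: "a \<le> \<rho>" unfolding \<rho>_def using a0 by (simp add: real_le_rsqrt)
  have \<rho>1: "\<rho> < 1" unfolding \<rho>_def using ay by simp
  have \<rho>sq: "\<rho>\<^sup>2 = a\<^sup>2 + t" unfolding \<rho>_def t_def by simp
  have A0: "1 - a\<^sup>2/2 \<le> A" unfolding A_def using cos_bounds01[OF a0] a1 by simp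
  have Apos: "0 < A" using A0 a2 by simp
  have B0: "a - a^3/6 \<le> B" unfolding B_def using sin_lower01[OF a0] a1 by simp
  have gs: "(1 - \<rho>) / cos \<rho> \<le> (1 - a) / A - 3/4 * (\<rho> - a)"
    using lin_aux[OF gslope[OF a0 \<rho>a less_imp_le[OF \<rho>1]]] unfolding A_def .
  have r1: "t \<le> (\<rho> - a) * (1 + a)"
  proof -
    have "(\<rho> - a) * (\<rho> + a) = t" using \<rho>sq by (simp add: algebra_simps power2_eq_square)
    moreover have "(\<rho> - a) * (\<rho> + a) \<le> (\<rho> - a) * (1 + a)"
      using \<rho>a \<rho>1 by (intro mult_left_mono) auto
    ultimately show ?thesis by simp
  qed
  have Qdef: "Q = Ch\<^sup>2 - 1" unfolding Q_def Ch_def using cosh_square_eq[of y] by simp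
  have Ch1: "1 \<le> Ch" unfolding Ch_def by (rule cosh_real_ge_1)
  have Ch2: "Ch - 1 \<le> 5/8 * t"
  proof -
    have "Ch \<le> 1 + t/2 + t\<^sup>2/8" using cosh_upper[OF y1] unfolding Ch_def t_def
      by (simp add: power2_eq_square eval_nat_numeral)
    moreover have "t\<^sup>2 \<le> t" using mult_left_le_one_le[of t t] t0 t1 by (simp add: power2_eq_square)
    ultimately show ?thesis by simp
  qed
  have S: "t \<le> S" unfolding S_def t_def by (rule y_sinh_ge)
  have Q: "t \<le> Q" unfolding Q_def t_def by (rule sinh_sq_ge)
  have AB: "A\<^sup>2 + B\<^sup>2 = 1" unfolding A_def B_def by (simp add: add.commute)
  have key: "(1 - a\<^sup>2) * (Ch - 1) * (Ch + 1 - A\<^sup>2) \<le> 3/4 * t * A * (A\<^sup>2 + Q) + (1 + a) * A * B * S"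
    using key_alg[OF a0 _ A0 B0 t0 _ S Q Qdef Ch1 Ch2 AB] a1 t1 by simp
  define D where "D = A\<^sup>2 + Q"
  have Dpos: "0 \<le> D" unfolding D_def Q_def by simp
  define N where "N = (1 - a) * A * Ch + B * S"
  define G0 where "G0 = (1 - a) / A - 3/4 * (\<rho> - a)"
  have c1: "(1 - \<rho>) / cos \<rho> * D \<le> G0 * D" using gs Dpos unfolding G0_def by (intro mult_right_mono)
  have pos: "0 < A * (1 + a)" using Apos a0 by simp
  have e1: "G0 * D * (A * (1 + a)) = (1 - a\<^sup>2) * D - 3/4 * ((\<rho> - a) * (1 + a)) * (A * D)"
    unfolding G0_def using Apos by (simp add: field_simps power2_eq_square)
  have c2: "3/4 * t * (A * D) \<le> 3/4 * ((\<rho> - a) * (1 + a)) * (A * D)"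
    using r1 Apos Dpos by (intro mult_right_mono mult_left_mono) auto
  have e2: "(1 - a\<^sup>2) * D = (1 - a\<^sup>2) * (Ch - 1) * (Ch + 1 - A\<^sup>2) + (1 - a\<^sup>2) * A\<^sup>2 * Ch"
    unfolding D_def Qdef by (simp add: algebra_simps power2_eq_square)
  have e3: "N * (A * (1 + a)) = (1 - a\<^sup>2) * A\<^sup>2 * Ch + (1 + a) * A * B * S"
    unfolding N_def by (simp add: algebra_simps power2_eq_square)
  have e4: "3/4 * t * A * (A\<^sup>2 + Q) = 3/4 * t * (A * D)" unfolding D_def by simp
  have "G0 * D * (A * (1 + a)) \<le> N * (A * (1 + a))"
    using e1 c2 e2 e3 e4 key by linarith
  then have "G0 * D \<le> N" using mult_le_cancel_right_pos[OF pos] by blast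
  with c1 have "(1 - \<rho>) / cos \<rho> * D \<le> N" by linarith
  then show ?thesis unfolding \<rho>_def D_def N_def A_def B_def Ch_def S_def Q_def by (simp add: ac_simps)
qed

lemma lower_all:
  fixes x y :: real
  assumes xy: "x\<^sup>2 + y\<^sup>2 < 1"
  shows "(1 - sqrt (x\<^sup>2 + y\<^sup>2)) / cos (sqrt (x\<^sup>2 + y\<^sup>2)) * ((cos x)\<^sup>2 + (sinh y)\<^sup>2)
         \<le> (1 + x) * cos x * cosh y - y * sin x * sinh y"
proof (cases "x \<le> 0")
  case True
  have "0 \<le> -x" "(-x)\<^sup>2 + y\<^sup>2 < 1" using True xy by auto
  from lower_neg[OF this] show ?thesis by simp
next
  case False
  then have x0: "0 \<le> x" by simp
  from lower_neg[OF x0 xy] 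
  have "(1 - sqrt (x\<^sup>2 + y\<^sup>2)) / cos (sqrt (x\<^sup>2 + y\<^sup>2)) * ((cos x)\<^sup>2 + (sinh y)\<^sup>2)
         \<le> (1 - x) * cos x * cosh y + y * sin x * sinh y" .
  moreover have "y * sin x * sinh y \<le> x * cos x * cosh y" using sym_ineq[OF x0] xy by simp
  ultimately show ?thesis by (simp add: algebra_simps)
qed

lemma Re_phi:
  fixes w :: complex
  defines "x \<equiv> Re w" and "y \<equiv> Im w"
  shows "Re ((1 + w) / cos w) = ((1 + x) * cos x * cosh y - y * sin x * sinh y) / ((cos x)\<^sup>2 + (sinh y)\<^sup>2)"
proof -
  have rc: "Re (cos w) = cos x * cosh y" unfolding x_def y_def by (simp add: Re_cos cosh_def)
  have ic: "Im (cos w) = - (sin x * sinh y)" unfolding x_def y_def by (simp add: Im_cos sinh_def field_simps)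
  have den: "(Re (cos w))\<^sup>2 + (Im (cos w))\<^sup>2 = (cos x)\<^sup>2 + (sinh y)\<^sup>2"
  proof -
    have "(Re (cos w))\<^sup>2 + (Im (cos w))\<^sup>2 = (cos x)\<^sup>2 * (cosh y)\<^sup>2 + (sin x)\<^sup>2 * (sinh y)\<^sup>2"
      unfolding rc ic by (simp add: power_mult_distrib)
    also have "\<dots> = (cos x)\<^sup>2 * ((sinh y)\<^sup>2 + 1) + (1 - (cos x)\<^sup>2) * (sinh y)\<^sup>2"
      by (simp add: cosh_square_eq sin_squared_eq)
    also have "\<dots> = (cos x)\<^sup>2 + (sinh y)\<^sup>2" by (simp add: algebra_simps)
    finally show ?thesis .
  qed
  have "Re ((1 + w) / cos w) = (Re (1 + w) * Re (cos w) + Im (1 + w) * Im (cos w)) / ((Re (cos w))\<^sup>2 + (Im (cos w))\<^sup>2)"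
    by (rule Re_divide)
  also have "\<dots> = ((1 + x) * cos x * cosh y - y * sin x * sinh y) / ((cos x)\<^sup>2 + (sinh y)\<^sup>2)"
    by (subst den) (simp add: rc ic x_def y_def algebra_simps)
  finally show ?thesis .
qed

lemma norm_sq_complex: "(norm (w::complex)) = sqrt ((Re w)\<^sup>2 + (Im w)\<^sup>2)"
  by (simp add: norm_complex_def)

lemma cos_norm_pos: fixes s :: real assumes "0 \<le> s" "s < 1" shows "0 < cos s"
  using assms pi_gt3 by (intro cos_gt_zero_pi) auto

lemma norm_cos_ge:
  fixes w :: complex assumes "norm w < 1"
  shows "cos (norm w) \<le> norm (cos w)"
proof -
  define x where "x = Re w"
  define y where "y = Im w"
  have ax: "\<bar>x\<bar> \<le> norm w" unfolding x_def by (rule abs_Re_le_cmod)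
  have c1: "cos (norm w) \<le> cos \<bar>x\<bar>"
    using ax assms pi_gt3 by (intro cos_monotone_0_pi_le) auto
  have c0: "0 \<le> cos (norm w)" using cos_norm_pos[of "norm w"] assms by simp
  have "(norm (cos w))\<^sup>2 = (Re (cos w))\<^sup>2 + (Im (cos w))\<^sup>2" by (simp add: cmod_power2)
  also have "\<dots> = (cos x)\<^sup>2 + (sinh y)\<^sup>2"
  proof -
    have rc: "Re (cos w) = cos x * cosh y" unfolding x_def y_def by (simp add: Re_cos cosh_def)
    have ic: "Im (cos w) = - (sin x * sinh y)" unfolding x_def y_def by (simp add: Im_cos sinh_def field_simps)
    have "(Re (cos w))\<^sup>2 + (Im (cos w))\<^sup>2 = (cos x)\<^sup>2 * (cosh y)\<^sup>2 + (sin x)\<^sup>2 * (sinh y)\<^sup>2"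
      unfolding rc ic by (simp add: power_mult_distrib)
    also have "\<dots> = (cos x)\<^sup>2 * ((sinh y)\<^sup>2 + 1) + (1 - (cos x)\<^sup>2) * (sinh y)\<^sup>2"
      by (simp add: cosh_square_eq sin_squared_eq)
    also have "\<dots> = (cos x)\<^sup>2 + (sinh y)\<^sup>2" by (simp add: algebra_simps)
    finally show ?thesis .
  qed
  also have "\<dots> \<ge> (cos x)\<^sup>2" by simp
  finally have "(cos x)\<^sup>2 \<le> (norm (cos w))\<^sup>2" .
  moreover have "(cos (norm w))\<^sup>2 \<le> (cos x)\<^sup>2"
    using c1 c0 by (simp add: power_mono)
  ultimately have "(cos (norm w))\<^sup>2 \<le> (norm (cos w))\<^sup>2" by linarith
  then show ?thesis using c0 by (simp add: power2_le_iff_abs_le)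
qed

lemma cos_nonzero_disc: fixes w :: complex assumes "norm w < 1" shows "cos w \<noteq> 0"
  using norm_cos_ge[OF assms] cos_norm_pos[of "norm w"] assms by auto

lemma Re_phi_upper:
  fixes w :: complex assumes "norm w < 1"
  shows "Re ((1 + w) / cos w) \<le> (1 + norm w) / cos (norm w)"
proof -
  have cp: "0 < cos (norm w)" using cos_norm_pos[of "norm w"] assms by simp
  have "Re ((1 + w) / cos w) \<le> norm ((1 + w) / cos w)" by (rule complex_Re_le_cmod)
  also have "\<dots> = norm (1 + w) / norm (cos w)" by (simp add: norm_divide)
  also have "\<dots> \<le> (1 + norm w) / cos (norm w)"
    using norm_cos_ge[OF assms] cp norm_triangle_ineq[of 1 w]
    by (intro frac_le) auto
  finally show ?thesis .
qed

lemma Re_phi_lower: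
  fixes w :: complex assumes "norm w < 1"
  shows "(1 - norm w) / cos (norm w) \<le> Re ((1 + w) / cos w)"
proof -
  define x where "x = Re w"
  define y where "y = Im w"
  have nw: "norm w = sqrt (x\<^sup>2 + y\<^sup>2)" unfolding x_def y_def by (rule norm_sq_complex)
  have xy: "x\<^sup>2 + y\<^sup>2 < 1" using assms unfolding nw by (simp add: real_sqrt_lt_1_iff)
  have x1: "\<bar>x\<bar> < 1" using assms abs_Re_le_cmod[of w] unfolding x_def by linarith
  have cx: "0 < cos x" using x1 pi_gt3 by (intro cos_gt_zero_pi) auto
  have dpos: "0 < (cos x)\<^sup>2 + (sinh y)\<^sup>2" using cx by (simp add: add_pos_nonneg)
  have "(1 - norm w) / cos (norm w) * ((cos x)\<^sup>2 + (sinh y)\<^sup>2) \<le> (1 + x) * cos x * cosh y - y * sin x * sinh y"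
    unfolding nw by (rule lower_all[OF xy])
  then have "(1 - norm w) / cos (norm w) \<le> ((1 + x) * cos x * cosh y - y * sin x * sinh y) / ((cos x)\<^sup>2 + (sinh y)\<^sup>2)"
    using dpos by (simp add: pos_le_divide_eq)
  also have "\<dots> = Re ((1 + w) / cos w)" unfolding x_def y_def by (rule Re_phi[symmetric])
  finally show ?thesis .
qed

lemma phi_holo: "(\<lambda>w::complex. (1 + w) / cos w) holomorphic_on ball 0 1"
  by (intro holomorphic_intros) (use cos_nonzero_disc in auto)

lemma extremal: "\<exists>f\<in>Snc. \<forall>z\<in>ball 0 1. z \<noteq> 0 \<longrightarrow> z * deriv f z / f z = (1 + z) / cos z"
proof -
  define \<phi> where "\<phi> = (\<lambda>w::complex. (1 + w) / cos w)"
  have hol\<phi>: "\<phi> holomorphic_on ball 0 1" unfolding \<phi>_def by (rule phi_holo)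
  have \<phi>0: "\<phi> 0 = 1" by (simp add: \<phi>_def)
  define q where "q = (\<lambda>z. if z = 0 then deriv \<phi> 0 else (\<phi> z - \<phi> 0) / (z - 0))"
  have holq: "q holomorphic_on ball 0 1" unfolding q_def by (rule pole_lemma[OF hol\<phi>]) simp
  obtain g where g: "\<And>x. x \<in> ball 0 1 \<Longrightarrow> (g has_field_derivative q x) (at x within ball 0 1)"
    using holomorphic_convex_primitive'[OF convex_ball open_ball holq] by blast
  have g': "(g has_field_derivative q x) (at x)" if "x \<in> ball 0 1" for x
    using g[OF that] at_within_open[OF that open_ball] by simp
  define F where "F = (\<lambda>z. g z - g 0)"
  define f where "f = (\<lambda>z. z * exp (F z))"
  have fd: "(f has_field_derivative (exp (F x) * (1 + x * q x))) (at x)" if "x \<in> ball 0 1" for x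
    unfolding f_def F_def
    by (rule derivative_eq_intros g'[OF that] refl | simp add: algebra_simps)+
  have holf: "f holomorphic_on ball 0 1"
    unfolding holomorphic_on_open[OF open_ball] using fd by blast
  have df: "deriv f x = exp (F x) * (1 + x * q x)" if "x \<in> ball 0 1" for x
    using fd[OF that] by (rule DERIV_imp_deriv)
  have f0: "f 0 = 0" by (simp add: f_def)
  have df0: "deriv f 0 = 1" using df[of 0] by (simp add: F_def)
  have key: "z * deriv f z / f z = \<phi> z" if "z \<in> ball 0 1" "z \<noteq> 0" for z
  proof -
    have "z * q z = \<phi> z - 1" using that \<phi>0 by (simp add: q_def)
    then have "deriv f z = exp (F z) * \<phi> z" using df[OF that(1)] by simp
    then show ?thesis using that(2) by (simp add: f_def)
  qed
  have fA: "f \<in> classA" unfolding classA_def using holf f0 df0 by simp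
  have fS: "subordinate (zf'_over_f f) (\<lambda>w. (1 + w) / cos w)"
    unfolding subordinate_def
  proof (intro exI[of _ "\<lambda>z. z"] conjI)
    show "(\<lambda>z. z) holomorphic_on ball 0 1" by simp
    show "(\<lambda>z. z) ` ball 0 1 \<subseteq> ball 0 1" by simp
    show "\<forall>z\<in>ball 0 1. zf'_over_f f z = (1 + z) / cos z"
      using key \<phi>0 by (auto simp: zf'_over_f_def \<phi>_def)
  qed simp
  have "f \<in> Snc" unfolding Snc_def using fA fS by simp
  moreover have "\<forall>z\<in>ball 0 1. z \<noteq> 0 \<longrightarrow> z * deriv f z / f z = (1 + z) / cos z"
    using key by (simp add: \<phi>_def)
  ultimately show ?thesis by blast
qed

lemma Snc_bound:
  assumes "f \<in> Snc" "norm z < 1" "z \<noteq> 0"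
  shows "\<exists>w. norm w \<le> norm z \<and> z * deriv f z / f z = (1 + w) / cos w"
proof -
  from assms(1) obtain \<omega> where hol: "\<omega> holomorphic_on ball 0 1" and w0: "\<omega> 0 = 0"
    and img: "\<omega> ` ball 0 1 \<subseteq> ball 0 1"
    and eq: "\<forall>z\<in>ball 0 1. zf'_over_f f z = (1 + \<omega> z) / cos (\<omega> z)"
    unfolding Snc_def subordinate_def by blast
  have no: "norm (\<omega> u) < 1" if "norm u < 1" for u
  proof -
    have "u \<in> ball 0 1" using that by simp
    then have "\<omega> u \<in> ball 0 1" using img by blast
    then show ?thesis by simp
  qed
  have "norm (\<omega> z) \<le> norm z" using Schwarz_Lemma(1)[OF hol w0 no assms(2)] by blast
  moreover have "z * deriv f z / f z = (1 + \<omega> z) / cos (\<omega> z)"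
    using bspec[OF eq, of z] assms(2,3) by (simp add: zf'_over_f_def)
  ultimately show ?thesis by blast
qed

lemma g_strict: fixes s u :: real assumes "0 \<le> s" "s < u" "u \<le> 1"
  shows "(1 - u) / cos u < (1 - s) / cos s"
proof -
  have "0 < 3/4 * (u - s)" using assms by simp
  then show ?thesis using lin_aux[OF gslope[OF assms(1) less_imp_le[OF assms(2)] assms(3)]] by linarith
qed

lemma g_mono: fixes s u :: real assumes "0 \<le> s" "s \<le> u" "u \<le> 1"
  shows "(1 - u) / cos u \<le> (1 - s) / cos s"
  using g_strict[OF assms(1) _ assms(3)] assms(2) by (cases "s = u") auto

lemma h_strict: fixes s u :: real assumes "0 \<le> s" "s < u" "u \<le> 1"
  shows "(1 + s) / cos s < (1 + u) / cos u"
proof -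
  have cu: "0 < cos u" using assms pi_gt3 by (intro cos_gt_zero_pi) auto
  have "cos u \<le> cos s" using assms pi_gt3 by (intro cos_monotone_0_pi_le) auto
  then have "(1 + s) / cos s \<le> (1 + s) / cos u" using cu assms by (intro divide_left_mono) auto
  also have "\<dots> < (1 + u) / cos u" using cu assms by (intro divide_strict_right_mono) auto
  finally show ?thesis .
qed

lemma h_mono: fixes s u :: real assumes "0 \<le> s" "s \<le> u" "u \<le> 1"
  shows "(1 + s) / cos s \<le> (1 + u) / cos u"
  using h_strict[OF assms(1) _ assms(3)] assms(2) by (cases "s = u") auto

lemma Snc_lower:
  fixes z :: complex
  assumes "f \<in> Snc" "norm z < 1" "z \<noteq> 0"
  shows "(1 - norm z) / cos (norm z) \<le> Re (z * deriv f z / f z)"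
proof -
  obtain w where w: "norm w \<le> norm z" "z * deriv f z / f z = (1 + w) / cos w"
    using Snc_bound[OF assms] by blast
  have "(1 - norm z) / cos (norm z) \<le> (1 - norm w) / cos (norm w)"
    using w(1) assms(2) by (intro g_mono) auto
  also have "\<dots> \<le> Re ((1 + w) / cos w)" using w(1) assms(2) by (intro Re_phi_lower) auto
  finally show ?thesis using w(2) by simp
qed

lemma Snc_upper:
  fixes z :: complex
  assumes "f \<in> Snc" "norm z < 1" "z \<noteq> 0"
  shows "Re (z * deriv f z / f z) \<le> (1 + norm z) / cos (norm z)"
proof -
  obtain w where w: "norm w \<le> norm z" "z * deriv f z / f z = (1 + w) / cos w"
    using Snc_bound[OF assms] by blast
  have "Re ((1 + w) / cos w) \<le> (1 + norm w) / cos (norm w)" using w(1) assms(2) by (intro Re_phi_upper) auto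
  also have "\<dots> \<le> (1 + norm z) / cos (norm z)"
    using w(1) assms(2) by (intro h_mono) auto
  finally show ?thesis using w(2) by simp
qed

lemma phi_real: "(1 + complex_of_real x) / cos (complex_of_real x) = complex_of_real ((1 + x) / cos x)"
  by (simp add: cos_of_real)

theorem mainTheorem9:
  shows "(\<forall>(\<alpha>::real) r. 0 < \<alpha> \<and> \<alpha> < 1 \<and> 0 < r \<and> r < 1 \<and> (1 - r) - \<alpha> * cos r = 0 \<longrightarrow>
            (\<forall>f\<in>Snc. \<forall>z. z \<noteq> 0 \<and> norm z < r \<longrightarrow> Re (z * deriv f z / f z) > \<alpha>) \<and>
            (\<forall>r'>r. \<exists>f\<in>Snc. \<exists>z. z \<noteq> 0 \<and> norm z < min r' 1 \<and> Re (z * deriv f z / f z) \<le> \<alpha>))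
       \<and> (\<forall>(\<beta>::real) r. 1 < \<beta> \<and> \<beta> < 2 / cos 1 \<and> 0 < r \<and> 1 + r = \<beta> * cos r \<and>
                (\<forall>s. 0 < s \<and> s < r \<longrightarrow> 1 + s \<noteq> \<beta> * cos s) \<longrightarrow>
            (\<forall>f\<in>Snc. \<forall>z. z \<noteq> 0 \<and> norm z < r \<longrightarrow> Re (z * deriv f z / f z) < \<beta>) \<and>
            (\<forall>r'>r. \<exists>f\<in>Snc. \<exists>z. z \<noteq> 0 \<and> norm z < min r' 1 \<and> Re (z * deriv f z / f z) \<ge> \<beta>))
       \<and> (\<forall>(\<beta>::real). \<beta> \<ge> 2 / cos 1 \<longrightarrow>
            (\<forall>f\<in>Snc. \<forall>z. z \<noteq> 0 \<and> norm z < 1 \<longrightarrow> Re (z * deriv f z / f z) < \<beta>))"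
proof (intro conjI allI impI)
  obtain f0 where f0: "f0 \<in> Snc" and f0eq: "\<And>z::complex. z \<in> ball 0 1 \<Longrightarrow> z \<noteq> 0 \<Longrightarrow> z * deriv f0 z / f0 z = (1 + z) / cos z"
    using extremal by blast
  have cpos: "0 < cos s" if "0 \<le> s" "s \<le> 1" for s :: real
    using that pi_gt3 by (intro cos_gt_zero_pi) auto
  {
    fix \<alpha> r :: real
    assume H: "0 < \<alpha> \<and> \<alpha> < 1 \<and> 0 < r \<and> r < 1 \<and> (1 - r) - \<alpha> * cos r = 0"
    then have r0: "0 < r" "r < 1" by auto
    have cr: "0 < cos r" using cpos r0 by simp
    have \<alpha>r: "\<alpha> = (1 - r) / cos r" using H cr by (simp add: field_simps)
    show "\<forall>f\<in>Snc. \<forall>z. z \<noteq> 0 \<and> norm z < r \<longrightarrow> Re (z * deriv f z / f z) > \<alpha>"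
    proof (intro ballI allI impI)
      fix f and z :: complex assume f: "f \<in> Snc" and z: "z \<noteq> 0 \<and> norm z < r"
      have "\<alpha> < (1 - norm z) / cos (norm z)" unfolding \<alpha>r using z r0 by (intro g_strict) auto
      also have "\<dots> \<le> Re (z * deriv f z / f z)" using Snc_lower[OF f] z r0 by auto
      finally show "Re (z * deriv f z / f z) > \<alpha>" .
    qed
    {
      fix r' :: real assume r': "r' > r"
      define x where "x = (r + min r' 1) / 2"
      have x: "r < x" "x < min r' 1" "x < 1" using r' r0 unfolding x_def by auto
      define z where "z = complex_of_real (-x)"
      have z0: "z \<noteq> 0" "norm z = x" using x r0 unfolding z_def by auto
      have "z * deriv f0 z / f0 z = (1 + z) / cos z" using f0eq[of z] z0 x by simp
      also have "\<dots> = complex_of_real ((1 - x) / cos x)" unfolding z_def by (simp add: cos_of_real)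
      finally have "Re (z * deriv f0 z / f0 z) = (1 - x) / cos x" by simp
      also have "\<dots> \<le> \<alpha>" unfolding \<alpha>r using x r0 by (intro less_imp_le g_strict) auto
      finally show "\<exists>f\<in>Snc. \<exists>z. z \<noteq> 0 \<and> norm z < min r' 1 \<and> Re (z * deriv f z / f z) \<le> \<alpha>"
        using f0 z0 x by blast
    }
  }
  {
    fix \<beta> r :: real
    assume H: "1 < \<beta> \<and> \<beta> < 2 / cos 1 \<and> 0 < r \<and> 1 + r = \<beta> * cos r \<and>
                (\<forall>s. 0 < s \<and> s < r \<longrightarrow> 1 + s \<noteq> \<beta> * cos s)"
    have c1: "0 < cos (1::real)" using cpos[of 1] by simp
    have "\<exists>s. 0 \<le> s \<and> s \<le> 1 \<and> 1 + s - \<beta> * cos s = 0"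
    proof (rule IVT')
      show "1 + 0 - \<beta> * cos 0 \<le> 0" using H by simp
      have "\<beta> * cos 1 < 2" using H c1 by (simp add: field_simps)
      then show "0 \<le> 1 + 1 - \<beta> * cos 1" by simp
      show "continuous_on {0..1} (\<lambda>s::real. 1 + s - \<beta> * cos s)" by (intro continuous_intros)
    qed simp
    then obtain s where s: "0 \<le> s" "s \<le> 1" "1 + s - \<beta> * cos s = 0" by blast
    have s0: "s \<noteq> 0" using s H by auto
    have s1: "s \<noteq> 1"
    proof
      assume "s = 1"
      then have "\<beta> * cos 1 = 2" using s by simp
      then show False using H c1 by (simp add: field_simps)
    qed
    have rs: "r \<le> s"
    proof (rule ccontr)
      assume "\<not> r \<le> s"
      then have "0 < s \<and> s < r" using s s0 by auto
      then show False using H s(3) by auto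
    qed
    have r0: "0 < r" "r < 1" using H rs s s1 by auto
    have cr: "0 < cos r" using cpos r0 by simp
    have \<beta>r: "\<beta> = (1 + r) / cos r" using H cr by (simp add: field_simps)
    show "\<forall>f\<in>Snc. \<forall>z. z \<noteq> 0 \<and> norm z < r \<longrightarrow> Re (z * deriv f z / f z) < \<beta>"
    proof (intro ballI allI impI)
      fix f and z :: complex assume f: "f \<in> Snc" and z: "z \<noteq> 0 \<and> norm z < r"
      have "Re (z * deriv f z / f z) \<le> (1 + norm z) / cos (norm z)" using Snc_upper[OF f] z r0 by auto
      also have "\<dots> < \<beta>" unfolding \<beta>r using z r0 by (intro h_strict) auto
      finally show "Re (z * deriv f z / f z) < \<beta>" .
    qed
    {
      fix r' :: real assume r': "r' > r"
      define x where "x = (r + min r' 1) / 2"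
      have x: "r < x" "x < min r' 1" "x < 1" using r' r0 unfolding x_def by auto
      define z where "z = complex_of_real x"
      have z0: "z \<noteq> 0" "norm z = x" using x r0 unfolding z_def by auto
      have "z * deriv f0 z / f0 z = (1 + z) / cos z" using f0eq[of z] z0 x by simp
      also have "\<dots> = complex_of_real ((1 + x) / cos x)" unfolding z_def by (simp add: cos_of_real)
      finally have e: "Re (z * deriv f0 z / f0 z) = (1 + x) / cos x" by simp
      have "\<beta> \<le> (1 + x) / cos x" unfolding \<beta>r using x r0 by (intro less_imp_le h_strict) auto
      then show "\<exists>f\<in>Snc. \<exists>z. z \<noteq> 0 \<and> norm z < min r' 1 \<and> Re (z * deriv f z / f z) \<ge> \<beta>"
        using f0 z0 x e by (intro bexI[OF _ f0] exI[of _ z]) auto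
    }
  }
  {
    fix \<beta> :: real
    assume H: "\<beta> \<ge> 2 / cos 1"
    show "\<forall>f\<in>Snc. \<forall>z. z \<noteq> 0 \<and> norm z < 1 \<longrightarrow> Re (z * deriv f z / f z) < \<beta>"
    proof (intro ballI allI impI)
      fix f and z :: complex assume f: "f \<in> Snc" and z: "z \<noteq> 0 \<and> norm z < 1"
      have "Re (z * deriv f z / f z) \<le> (1 + norm z) / cos (norm z)" using Snc_upper[OF f] z by auto
      also have "\<dots> < (1 + 1) / cos 1" using z by (intro h_strict) auto
      finally show "Re (z * deriv f z / f z) < \<beta>" using H by simp
    qed
  }
qed

end
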